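(* Consider the random directed graph $\mathcal{G}_{n,1/2}$ on $n$ vertices (each ordered pair of distinct vertices is an edge independently with probability $\frac12$, so all such directed graphs are equally likely), with an arbitrary partition $(V_1,V_P)$ of the vertices into player-1 and probabilistic vertices and an arbitrary nonempty target (B\"uchi) set $B$. For all sufficiently large $n$, the probability that the classical algorithm for almost-sure winning in MDPs with B\"uchi objective $B$ takes more than one iteration is less than $\left(\frac34\right)^n$.
   Context: For $U \subseteq V$ in a graph $G$ with vertex partition $(V_1,V_P)$, the random attractor $\mathrm{Attr}_P(U)$ is $\bigcup_{i\ge 0} X_i$, where $X_0=U$ and $X_{i+1}= X_i \cup \{v\in V_P : E(v)\cap X_i \neq\emptyset\} \cup \{v \in V_1 : E(v)\subseteq X_i\}$, with $E(v)$ the set of out-neighbours of $v$. The classical algorithm for B\"uchi objective $B$ works in iterations: starting from $G^1=G$ with vertex set $V^1$, in iteration $i$ it computes the set $Z^i$ of vertices of $G^i$ with a directed path in $G^i$ to a vertex of $B\cap V^i$, sets $U^i=V^i\setminus Z^i$; if $U^i=\emptyset$ it stops and outputs $Z^i$, otherwise it removes $\mathrm{Attr}_P(U^i)$ (computed in $G^i$) from $G^i$ to get $G^{i+1}$ and continues. *)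

theory Defs
  imports Complex_Main
begin

text \<open>A subgraph G^i is represented by its
  vertex set S; its edges are those of E with both endpoints in S.\<close>

definition digraphs :: "nat \<Rightarrow> (nat \<times> nat) set set" where
  "digraphs n = Pow {(u, v). u < n \<and> v < n \<and> u \<noteq> v}"

definition sub_edges :: "(nat \<times> nat) set \<Rightarrow> nat set \<Rightarrow> (nat \<times> nat) set" where
  "sub_edges E S = E \<inter> (S \<times> S)"

definition reach_set :: "(nat \<times> nat) set \<Rightarrow> nat set \<Rightarrow> nat set \<Rightarrow> nat set" where
  "reach_set E S B = {v \<in> S. \<exists>b \<in> B \<inter> S. (v, b) \<in> (sub_edges E S)\<^sup>*}"

text \<open>One step of the random attractor computation in the subgraph on S,
  with V1 the player-1 vertices and S - V1 the probabilistic vertices.\<close>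
definition attr_step :: "(nat \<times> nat) set \<Rightarrow> nat set \<Rightarrow> nat set \<Rightarrow> nat set \<Rightarrow> nat set" where
  "attr_step E V1 S X = X
     \<union> {v \<in> S - V1. \<exists>w. (v, w) \<in> sub_edges E S \<and> w \<in> X}
     \<union> {v \<in> S \<inter> V1. \<forall>w. (v, w) \<in> sub_edges E S \<longrightarrow> w \<in> X}"

definition attrP :: "(nat \<times> nat) set \<Rightarrow> nat set \<Rightarrow> nat set \<Rightarrow> nat set \<Rightarrow> nat set" where
  "attrP E V1 S U = (\<Union>i. (attr_step E V1 S ^^ i) U)"

text \<open>Vertex set of G^(i+1) (index shifted by one); once U^i is empty the
  algorithm has stopped and the set stays fixed.\<close>
fun buchi_vs :: "(nat \<times> nat) set \<Rightarrow> nat set \<Rightarrow> nat set \<Rightarrow> nat set \<Rightarrow> nat \<Rightarrow> nat set" where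
  "buchi_vs E V1 B V 0 = V"
| "buchi_vs E V1 B V (Suc i) =
     (let S = buchi_vs E V1 B V i; U = S - reach_set E S B in
      if U = {} then S else S - attrP E V1 S U)"

definition buchi_U :: "(nat \<times> nat) set \<Rightarrow> nat set \<Rightarrow> nat set \<Rightarrow> nat set \<Rightarrow> nat \<Rightarrow> nat set" where
  "buchi_U E V1 B V i = (let S = buchi_vs E V1 B V i in S - reach_set E S B)"

definition num_iterations :: "(nat \<times> nat) set \<Rightarrow> nat set \<Rightarrow> nat set \<Rightarrow> nat set \<Rightarrow> nat" where
  "num_iterations E V1 B V = Suc (LEAST i. buchi_U E V1 B V i = {})"

end

theory Submission
  imports Defs "HOL-Real_Asymp.Real_Asymp"
begin

lemma sqrt_half_le: "sqrt (1/2) \<le> (71/100::real)"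
  by (rule real_le_lsqrt) (simp_all add: power2_eq_square)

lemma sqrt_half_facts: "sqrt (1/2::real) ^ 2 = 1/2" "0 \<le> sqrt (1/2::real)" "sqrt (1/2::real) \<le> 1"
  by auto

lemma term_bound:
  fixes n j :: nat
  assumes "1 \<le> j" "2*j \<le> n" "real n * sqrt (1/2) ^ n \<le> 1"
  shows "real n ^ j * (1/2)^(j*(n-j)) \<le> real n * sqrt (1/2) ^ n"
proof -
  define s where "s = sqrt (1/2::real)"
  have s: "s^2 = 1/2" "0 \<le> s" "s \<le> 1" using sqrt_half_facts s_def by auto
  have "(1/2::real)^(j*(n-j)) = s^(2*(j*(n-j)))" by (simp add: power_mult s)
  also have "\<dots> \<le> s^(j*n)"
  proof (rule power_decreasing)
    obtain m where "n = 2*j + m" using assms(2) le_Suc_ex by blast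
    then show "j*n \<le> 2*(j*(n-j))" by (simp add: algebra_simps)
  qed (use s in auto)
  finally have "real n ^ j * (1/2)^(j*(n-j)) \<le> real n ^ j * s^(j*n)"
    by (simp add: mult_left_mono)
  also have "\<dots> = (real n * s^n)^j" by (simp add: power_mult_distrib mult.commute flip: power_mult)
  also have "\<dots> \<le> (real n * s^n)^1"
    by (rule power_decreasing) (use assms s_def s in auto)
  finally show ?thesis by (simp add: s_def)
qed

lemma binom_term_bound:
  fixes n k :: nat
  assumes "1 \<le> k" "k < n" "real n * sqrt (1/2) ^ n \<le> 1"
  shows "real (n-1 choose k) * (1/2)^(k*(n-k)) \<le> real n * sqrt (1/2) ^ n"
proof (cases "2*k \<le> n")
  case True
  have "n-1 choose k \<le> (n-1)^k" using assms by (intro binomial_le_pow) auto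
  also have "\<dots> \<le> n^k" by (simp add: power_mono)
  finally have "real (n-1 choose k) \<le> real n ^ k" by (metis of_nat_le_iff of_nat_power)
  then have "real (n-1 choose k) * (1/2)^(k*(n-k)) \<le> real n ^ k * (1/2)^(k*(n-k))"
    by (simp add: mult_right_mono)
  also have "\<dots> \<le> real n * sqrt (1/2) ^ n" using term_bound[OF assms(1) True assms(3)] .
  finally show ?thesis .
next
  case False
  define j where "j = n - k"
  have j: "1 \<le> j" "2*j \<le> n" "k = n - j" using assms False j_def by auto
  have "n-1 choose k = n-1 choose (n-1-k)" using assms by (intro binomial_symmetric) auto
  also have "\<dots> \<le> (n-1)^(n-1-k)" using assms by (intro binomial_le_pow) auto
  also have "\<dots> \<le> n^(n-1-k)" by (simp add: power_mono)
  also have "\<dots> \<le> n^j" using j_def assms by (intro power_increasing) auto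
  finally have "real (n-1 choose k) \<le> real n ^ j" by (metis of_nat_le_iff of_nat_power)
  then have "real (n-1 choose k) * (1/2)^(k*(n-k)) \<le> real n ^ j * (1/2)^(j*(n-j))"
    using j by (simp add: mult_right_mono mult.commute)
  also have "\<dots> \<le> real n * sqrt (1/2) ^ n" using term_bound[OF j(1,2) assms(3)] .
  finally show ?thesis .
qed

lemma sum_pow_card:
  assumes "finite W"
  shows "(\<Sum>R\<in>Pow W. (g (card R) :: real)) = (\<Sum>k\<le>card W. real (card W choose k) * g k)"
proof -
  have "(\<Sum>R\<in>Pow W. g (card R)) = (\<Sum>k\<in>{..card W}. \<Sum>R\<in>{R \<in> Pow W. card R = k}. g (card R))"
    by (rule sum.group[symmetric]) (use assms in \<open>auto intro: card_mono\<close>)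
  also have "\<dots> = (\<Sum>k\<le>card W. real (card W choose k) * g k)"
  proof (rule sum.cong[OF refl])
    fix k
    have "{R \<in> Pow W. card R = k} = {R. R \<subseteq> W \<and> card R = k}" by auto
    then show "(\<Sum>R\<in>{R \<in> Pow W. card R = k}. g (card R)) = real (card W choose k) * g k"
      using n_subsets[OF assms, of k] by simp
  qed
  finally show ?thesis .
qed

lemma bad_closed:
  assumes E: "E \<in> digraphs n" and b0: "b0 \<in> B" "B \<subseteq> {0..<n}"
    and it: "num_iterations E V1 B {0..<n} > 1"
  shows "\<exists>R. R \<subseteq> {0..<n} - {b0} \<and> R \<noteq> {} \<and>
           E \<in> Pow ({(u, v). u < n \<and> v < n \<and> u \<noteq> v} - R \<times> ({0..<n} - R))"
proof -
  define V where "V = {0..<n::nat}"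
  define D where "D = {(u, v). u < n \<and> v < n \<and> u \<noteq> v}"
  have ED: "E \<subseteq> D" using E by (simp add: digraphs_def D_def)
  have DV: "D \<subseteq> V \<times> V" by (auto simp: D_def V_def)
  have sub: "sub_edges E V = E" using ED DV by (auto simp: sub_edges_def)
  have "buchi_U E V1 B V 0 \<noteq> {}"
  proof
    assume "buchi_U E V1 B V 0 = {}"
    then have "(LEAST i. buchi_U E V1 B V i = {}) = 0" by (rule Least_eq_0)
    then show False using it by (simp add: num_iterations_def V_def)
  qed
  then obtain v where v: "v \<in> V" "v \<notin> reach_set E V B"
    by (auto simp: buchi_U_def)
  have b0V: "b0 \<in> V" using b0 by (auto simp: V_def)
  have nv: "(v, b0) \<notin> E\<^sup>*" using v b0 b0V sub by (auto simp: reach_set_def)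
  define R where "R = {x \<in> V. (x, b0) \<notin> E\<^sup>*}"
  have "R \<subseteq> V - {b0}" by (auto simp: R_def)
  moreover have "R \<noteq> {}" using v nv by (auto simp: R_def)
  moreover have "E \<subseteq> D - R \<times> (V - R)"
  proof
    fix p assume p: "p \<in> E"
    obtain x y where xy: "p = (x, y)" by (cases p)
    have "p \<notin> R \<times> (V - R)"
    proof
      assume "p \<in> R \<times> (V - R)"
      then have "x \<in> R" "y \<in> V" "(y, b0) \<in> E\<^sup>*" using xy by (auto simp: R_def)
      moreover have "(x, b0) \<in> E\<^sup>*"
        using converse_rtrancl_into_rtrancl[of x y E b0] p xy calculation by simp
      ultimately show False by (simp add: R_def)
    qed
    then show "p \<in> D - R \<times> (V - R)" using p ED by auto
  qed
  ultimately show ?thesis by (auto simp: V_def D_def)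
qed

lemma main_bound:
  assumes n1: "1 \<le> n" and small: "real n * sqrt (1/2) ^ n \<le> 1"
    and b0: "b0 \<in> B" "B \<subseteq> {0..<n}"
  shows "real (card {E \<in> digraphs n. num_iterations E V1 B {0..<n} > 1})
      / real (card (digraphs n)) \<le> real n ^ 2 * sqrt (1/2) ^ n"
proof -
  define V where "V = {0..<n::nat}"
  define D where "D = {(u, v). u < n \<and> v < n \<and> u \<noteq> v}"
  define W where "W = V - {b0}"
  define P where "P = {R \<in> Pow W. R \<noteq> {}}"
  define X where "X R = R \<times> (V - R)" for R
  have DV: "D \<subseteq> V \<times> V" by (auto simp: D_def V_def)
  have finD: "finite D" using DV finite_subset by (auto simp: V_def)
  have finW: "finite W" by (simp add: W_def V_def)
  have cW: "card W = n - 1" using b0 by (auto simp: W_def V_def)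
  have finP: "finite P" using finW by (simp add: P_def)
  have XD: "X R \<subseteq> D" if "R \<in> P" for R using that by (auto simp: X_def P_def W_def V_def D_def)
  have cX: "card (X R) = card R * (n - card R)" if "R \<in> P" for R
  proof -
    have "R \<subseteq> V" using that by (auto simp: P_def W_def)
    moreover have "finite R" using that finW by (auto simp: P_def intro: finite_subset)
    ultimately show ?thesis by (simp add: X_def card_cartesian_product card_Diff_subset V_def)
  qed
  define bad where "bad = {E \<in> digraphs n. num_iterations E V1 B {0..<n} > 1}"
  have "bad \<subseteq> (\<Union>R\<in>P. Pow (D - X R))"
  proof
    fix E assume "E \<in> bad"
    then have "E \<in> digraphs n" "num_iterations E V1 B {0..<n} > 1" by (auto simp: bad_def)
    from bad_closed[OF this(1) b0 this(2)] show "E \<in> (\<Union>R\<in>P. Pow (D - X R))"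
      by (auto simp: P_def W_def V_def D_def X_def)
  qed
  then have "card bad \<le> card (\<Union>R\<in>P. Pow (D - X R))"
    using finP finD by (intro card_mono) auto
  also have "\<dots> \<le> (\<Sum>R\<in>P. card (Pow (D - X R)))" using finP by (rule card_UN_le)
  finally have "real (card bad) \<le> (\<Sum>R\<in>P. real (card (Pow (D - X R))))"
    by (metis of_nat_le_iff of_nat_sum)
  also have "\<dots> = (\<Sum>R\<in>P. 2 ^ card D * (1/2) ^ (card R * (n - card R)))"
  proof (rule sum.cong[OF refl])
    fix R assume R: "R \<in> P"
    have c: "card (D - X R) = card D - card (X R)" using XD[OF R] finD
      by (meson card_Diff_subset finite_subset)
    have le: "card (X R) \<le> card D" using XD[OF R] finD by (rule card_mono[rotated])
    have "real (card (Pow (D - X R))) = 2 ^ (card D - card (X R))"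
      using finD by (simp add: card_Pow c)
    also have "\<dots> = 2 ^ card D * (1/2) ^ card (X R)"
      using le by (simp add: power_diff power_one_over field_simps)
    finally show "real (card (Pow (D - X R))) = 2 ^ card D * (1/2) ^ (card R * (n - card R))"
      using cX[OF R] by simp
  qed
  also have "\<dots> = 2 ^ card D * (\<Sum>R\<in>P. (1/2) ^ (card R * (n - card R)))"
    by (simp add: sum_distrib_left)
  finally have A: "real (card bad) / 2 ^ card D \<le> (\<Sum>R\<in>P. (1/2::real) ^ (card R * (n - card R)))"
    by (simp add: field_simps)
  define g where "g k = (if k = 0 then 0 else (1/2::real) ^ (k * (n - k)))" for k
  have "(\<Sum>R\<in>P. (1/2::real) ^ (card R * (n - card R))) = (\<Sum>R\<in>Pow W. g (card R))"
  proof -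
    have "(\<Sum>R\<in>Pow W. g (card R)) = (\<Sum>R\<in>P. g (card R))"
      using finW by (intro sum.mono_neutral_right) (auto simp: P_def g_def)
    also have "\<dots> = (\<Sum>R\<in>P. (1/2::real) ^ (card R * (n - card R)))"
    proof (rule sum.cong[OF refl])
      fix R assume "R \<in> P"
      then have "card R \<noteq> 0" using finW by (auto simp: P_def dest: finite_subset)
      then show "g (card R) = (1/2::real) ^ (card R * (n - card R))" by (simp add: g_def)
    qed
    finally show ?thesis by simp
  qed
  also have "\<dots> = (\<Sum>k\<le>n-1. real (n-1 choose k) * g k)"
    using sum_pow_card[OF finW, of g] cW by simp
  also have "\<dots> \<le> (\<Sum>k\<le>n-1. real n * sqrt (1/2) ^ n)"
  proof (rule sum_mono)
    fix k assume k: "k \<in> {..n-1}"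
    show "real (n-1 choose k) * g k \<le> real n * sqrt (1/2) ^ n"
    proof (cases "k = 0")
      case True then show ?thesis by (simp add: g_def)
    next
      case False
      then have "1 \<le> k" "k < n" using k n1 by auto
      from binom_term_bound[OF this small] False show ?thesis by (simp add: g_def)
    qed
  qed
  also have "\<dots> = real n ^ 2 * sqrt (1/2) ^ n" using n1 by (simp add: power2_eq_square)
  finally have "real (card bad) / 2 ^ card D \<le> real n ^ 2 * sqrt (1/2) ^ n" using A by linarith
  moreover have "card (digraphs n) = 2 ^ card D"
    using finD by (simp add: digraphs_def D_def card_Pow)
  ultimately show ?thesis by (simp add: bad_def)
qed

theorem theorem3:
  shows "\<exists>N. \<forall>n \<ge> N. \<forall>V1 B. V1 \<subseteq> {0..<n} \<and> B \<subseteq> {0..<n} \<and> B \<noteq> {} \<longrightarrow>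
    real (card {E \<in> digraphs n. num_iterations E V1 B {0..<n} > 1})
      / real (card (digraphs n)) < (3/4) ^ n"
proof -
  have ev1: "eventually (\<lambda>n::nat. real n ^ 2 * (71/100) ^ n < (3/4) ^ n) at_top"
    by real_asymp
  have ev2: "eventually (\<lambda>n::nat. real n * sqrt (1/2) ^ n \<le> 1) at_top"
    by real_asymp
  have ev3: "eventually (\<lambda>n::nat. 1 \<le> n) at_top" by (rule eventually_ge_at_top)
  obtain N where N: "\<And>n. n \<ge> N \<Longrightarrow> real n ^ 2 * (71/100) ^ n < (3/4) ^ n
      \<and> real n * sqrt (1/2) ^ n \<le> 1 \<and> 1 \<le> n"
    using eventually_conj[OF ev1 eventually_conj[OF ev2 ev3]]
    unfolding eventually_at_top_linorder by blast
  show ?thesis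
  proof (intro exI allI impI)
    fix n V1 B assume n: "N \<le> n" and VB: "V1 \<subseteq> {0..<n} \<and> B \<subseteq> {0..<n} \<and> B \<noteq> {}"
    then obtain b0 where b0: "b0 \<in> B" by auto
    have Nn: "real n ^ 2 * (71/100) ^ n < (3/4) ^ n" "real n * sqrt (1/2) ^ n \<le> 1" "1 \<le> n"
      using N[OF n] by auto
    have "real (card {E \<in> digraphs n. num_iterations E V1 B {0..<n} > 1})
      / real (card (digraphs n)) \<le> real n ^ 2 * sqrt (1/2) ^ n"
      using main_bound[OF Nn(3) Nn(2) b0] VB by auto
    also have "\<dots> \<le> real n ^ 2 * (71/100) ^ n"
      by (intro mult_left_mono power_mono sqrt_half_le) auto
    also have "\<dots> < (3/4) ^ n" by (rule Nn(1))
    finally show "real (card {E \<in> digraphs n. num_iterations E V1 B {0..<n} > 1})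
      / real (card (digraphs n)) < (3/4) ^ n" .
  qed
qed

end
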